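(* Let $q,w\in L^1[-1,1]$ be real-valued with $w(x)\ne0$ for a.e. $x\in[-1,1]$. Let $\lambda\in\mathbb{C}\setminus\mathbb{R}$ be an eigenvalue of $-y''+qy=\lambda wy$, $y(-1)=y(1)=0$, with eigenfunction $\phi$ normalized by $\int_{-1}^1|\phi|^2\,dx=1$. Then $$\int_{-1}^1 w|\phi|^2\,dx=0,\qquad \int_{-1}^1\big(|\phi'|^2+q|\phi|^2\big)\,dx=0,$$ $$\int_{-1}^1|\phi'|^2\,dx\le 4\|q_-\|_1^2,\qquad \int_{-1}^1 q_-|\phi|^2\,dx\le 4\|q_-\|_1^2,$$ and $|\phi(x)|^2\le \int_{-1}^1|\phi'|^2\,dx$ for all $x\in[-1,1]$.
   Context: $\|\cdot\|_1$ denotes the norm of $L^1[-1,1]$ and $q_-(x)=-\min\{0,q(x)\}$. A number $\lambda\in\mathbb{C}$ is an eigenvalue of $-y''+qy=\lambda wy$, $y(-1)=y(1)=0$, if there is a nontrivial function $y$ (an eigenfunction) with $y,y'$ absolutely continuous on $[-1,1]$ satisfying $-y''+qy=\lambda wy$ a.e. on $[-1,1]$ and $y(-1)=y(1)=0$. *)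

theory Defs
  imports "HOL-Analysis.Analysis"
begin

definition abs_cont_on :: "real \<Rightarrow> real \<Rightarrow> (real \<Rightarrow> 'b::real_normed_vector) \<Rightarrow> bool" where
  "abs_cont_on a b f \<longleftrightarrow>
     (\<forall>\<epsilon>>0. \<exists>\<delta>>0. \<forall>(n::nat) (s::nat \<Rightarrow> real) (t::nat \<Rightarrow> real).
        (\<forall>k<n. a \<le> s k \<and> s k \<le> t k \<and> t k \<le> b) \<and>
        (\<forall>i<n. \<forall>j<n. i \<noteq> j \<longrightarrow> t i \<le> s j \<or> t j \<le> s i) \<and>
        (\<Sum>k<n. t k - s k) < \<delta>
        \<longrightarrow> (\<Sum>k<n. norm (f (t k) - f (s k))) < \<epsilon>)"

definition neg_part :: "(real \<Rightarrow> real) \<Rightarrow> real \<Rightarrow> real" where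
  "neg_part q x = - min 0 (q x)"

end

theory Submission
  imports Defs
begin

lemma AE_negligible:
  assumes "AE x in lborel. P x"
  obtains N where "negligible N" "\<And>x. x \<notin> N \<Longrightarrow> P x"
proof -
  from assms obtain A where A: "{x \<in> space lborel. \<not> P x} \<subseteq> A" "A \<in> sets lborel" "emeasure lborel A = 0"
    by (auto elim: AE_E)
  have "A \<in> null_sets lborel" using A by auto
  hence "A \<in> null_sets lebesgue" by (metis null_sets_completionI)
  hence "negligible A" using negligible_iff_null_sets by blast
  thus ?thesis using A that by auto
qed

lemma ac_finite:
  fixes F :: "real \<Rightarrow> 'a::real_normed_vector"
  assumes "abs_cont_on a b F" "e > 0"
  obtains d where "d > 0" "\<And>I s t. finite I \<Longrightarrow> (\<forall>i\<in>I. a \<le> s i \<and> s i \<le> t i \<and> t i \<le> b) \<Longrightarrow>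
        (\<forall>i\<in>I. \<forall>j\<in>I. i \<noteq> j \<longrightarrow> t i \<le> s j \<or> t j \<le> s i) \<Longrightarrow>
        (\<Sum>i\<in>I. t i - s i) < d \<Longrightarrow> (\<Sum>i\<in>I. norm (F (t i) - F (s i))) < e"
proof -
  obtain d where d: "d > 0" and H: "\<forall>(n::nat) (s::nat\<Rightarrow>real) (t::nat\<Rightarrow>real). (\<forall>k<n. a \<le> s k \<and> s k \<le> t k \<and> t k \<le> b) \<and>
        (\<forall>i<n. \<forall>j<n. i \<noteq> j \<longrightarrow> t i \<le> s j \<or> t j \<le> s i) \<and>
        (\<Sum>k<n. t k - s k) < d \<longrightarrow> (\<Sum>k<n. norm (F (t k) - F (s k))) < e"
    using assms(1)[unfolded abs_cont_on_def, rule_format, OF assms(2)] by (elim exE conjE) (rule that)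
  show ?thesis
  proof (rule that[OF d])
    fix I :: "'b set" and s t
    assume fin: "finite I" and H1: "\<forall>i\<in>I. a \<le> s i \<and> s i \<le> t i \<and> t i \<le> b"
      and H2: "\<forall>i\<in>I. \<forall>j\<in>I. i \<noteq> j \<longrightarrow> t i \<le> s j \<or> t j \<le> s i"
      and H3: "(\<Sum>i\<in>I. t i - s i) < d"
    obtain h where h: "bij_betw h {0..<card I} I" using ex_bij_betw_nat_finite[OF fin] by blast
    have eq1: "(\<Sum>k<card I. (t \<circ> h) k - (s \<circ> h) k) = (\<Sum>i\<in>I. t i - s i)"
      using sum.reindex_bij_betw[OF h, of "\<lambda>i. t i - s i"] by (simp add: lessThan_atLeast0)
    have eq2: "(\<Sum>k<card I. norm (F ((t \<circ> h) k) - F ((s \<circ> h) k))) = (\<Sum>i\<in>I. norm (F (t i) - F (s i)))"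
      using sum.reindex_bij_betw[OF h, of "\<lambda>i. norm (F (t i) - F (s i))"] by (simp add: lessThan_atLeast0)
    have hI: "\<And>k. k < card I \<Longrightarrow> h k \<in> I" using h by (auto simp: bij_betw_def)
    have hinj: "\<And>i j. i < card I \<Longrightarrow> j < card I \<Longrightarrow> i \<noteq> j \<Longrightarrow> h i \<noteq> h j"
      using h by (auto simp: bij_betw_def inj_on_def)
    have "(\<Sum>k<card I. norm (F ((t \<circ> h) k) - F ((s \<circ> h) k))) < e"
    proof (rule H[rule_format], intro conjI allI impI)
      fix k assume "k < card I"
      thus "a \<le> (s \<circ> h) k" "(s \<circ> h) k \<le> (t \<circ> h) k" "(t \<circ> h) k \<le> b" using H1 hI by auto
    next
      fix i j assume "i < card I" "j < card I" "i \<noteq> j"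
      thus "(t \<circ> h) i \<le> (s \<circ> h) j \<or> (t \<circ> h) j \<le> (s \<circ> h) i" using H2 hI hinj by auto
    next
      show "(\<Sum>k<card I. (t \<circ> h) k - (s \<circ> h) k) < d" using eq1 H3 by simp
    qed
    thus "(\<Sum>i\<in>I. norm (F (t i) - F (s i))) < e" using eq2 by simp
  qed
qed

lemma ac_continuous:
  fixes F :: "real \<Rightarrow> 'a::real_normed_vector"
  assumes "abs_cont_on a b F"
  shows "continuous_on {a..b} F"
  unfolding continuous_on_iff
proof (intro ballI allI impI)
  fix x e assume x: "x \<in> {a..b}" and e: "(0::real) < e"
  obtain d where d: "d > 0" and H: "\<And>(I::unit set) s t. finite I \<Longrightarrow> (\<forall>i\<in>I. a \<le> s i \<and> s i \<le> t i \<and> t i \<le> b) \<Longrightarrow>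
        (\<forall>i\<in>I. \<forall>j\<in>I. i \<noteq> j \<longrightarrow> t i \<le> s j \<or> t j \<le> s i) \<Longrightarrow>
        (\<Sum>i\<in>I. t i - s i) < d \<Longrightarrow> (\<Sum>i\<in>I. norm (F (t i) - F (s i))) < e"
  proof -
    from ac_finite[OF assms e, where ?'b=unit] show ?thesis using that by blast
  qed
  show "\<exists>d>0. \<forall>x'\<in>{a..b}. dist x' x < d \<longrightarrow> dist (F x') (F x) < e"
  proof (intro exI conjI ballI impI)
    show "d > 0" by fact
    fix y assume y: "y \<in> {a..b}" "dist y x < d"
    show "dist (F y) (F x) < e"
    proof (cases "x \<le> y")
      case True
      have "(\<Sum>i\<in>{()}. norm (F ((\<lambda>_. y) i) - F ((\<lambda>_. x) i))) < e"
        by (rule H) (use True x y in \<open>simp_all add: dist_real_def\<close>)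
      thus ?thesis by (simp add: dist_norm)
    next
      case False
      have "(\<Sum>i\<in>{()}. norm (F ((\<lambda>_. x) i) - F ((\<lambda>_. y) i))) < e"
        by (rule H) (use False x y in \<open>simp_all add: dist_real_def\<close>)
      thus ?thesis by (simp add: dist_norm norm_minus_commute)
    qed
  qed
qed

lemma interiors_disj:
  fixes u v u' v' :: real
  assumes "u < v" "u' < v'" "interior {u..v} \<inter> interior {u'..v'} = {}"
  shows "v \<le> u' \<or> v' \<le> u"
proof (rule ccontr)
  assume "\<not> (v \<le> u' \<or> v' \<le> u)"
  hence "u' < v" "u < v'" by auto
  define m where "m = (max u u' + min v v') / 2"
  have lt: "max u u' < min v v'" using assms(1,2) \<open>u' < v\<close> \<open>u < v'\<close> by simp
  have "u \<le> max u u'" "u' \<le> max u u'" "min v v' \<le> v" "min v v' \<le> v'" by auto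
  hence "u < m" "u' < m" "m < v" "m < v'" using lt unfolding m_def by (auto simp: max_def min_def)
  hence "m \<in> {u<..<v} \<inter> {u'<..<v'}" by auto
  thus False using assms(3) lt by simp
qed

lemma ac_ftc:
  fixes F :: "real \<Rightarrow> 'a::real_normed_vector"
  assumes ab: "a \<le> b" and ac: "abs_cont_on a b F" and negE: "negligible E"
    and der: "\<And>x. x \<in> {a..b} \<Longrightarrow> x \<notin> E \<Longrightarrow> (F has_vector_derivative f x) (at x within {a..b})"
  shows "(f has_integral (F b - F a)) {a..b}"
proof -
  define g where "g x = (if x \<in> E then 0 else f x)" for x
  have "(g has_integral (F b - F a)) {a..b}"
    unfolding has_integral_real
  proof (intro allI impI)
    fix e :: real assume e: "e > 0"
    define \<epsilon> where "\<epsilon> = e / (2 * (b - a + 1))"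
    have \<epsilon>: "\<epsilon> > 0" using e ab by (simp add: \<epsilon>_def)
    have e2: "e / 2 > 0" using e by simp
    obtain d where d: "d > 0" and dH: "\<And>(I::(real \<times> real set) set) s t. finite I \<Longrightarrow> (\<forall>i\<in>I. a \<le> s i \<and> s i \<le> t i \<and> t i \<le> b) \<Longrightarrow>
        (\<forall>i\<in>I. \<forall>j\<in>I. i \<noteq> j \<longrightarrow> t i \<le> s j \<or> t j \<le> s i) \<Longrightarrow>
        (\<Sum>i\<in>I. t i - s i) < d \<Longrightarrow> (\<Sum>i\<in>I. norm (F (t i) - F (s i))) < e / 2"
    proof -
      from ac_finite[OF ac e2, where ?'b="real \<times> real set"] show ?thesis using that by blast
    qed
    have Eleb: "E \<in> sets lebesgue" using negE negligible_imp_sets by blast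
    obtain T where T: "open T" "E \<subseteq> T" "(T - E) \<in> lmeasurable" "emeasure lebesgue (T - E) < ennreal d"
      by (rule sets_lebesgue_outer_open[OF Eleb d])
    have Tm: "T \<in> lmeasurable"
    proof -
      have "T = (T - E) \<union> E" using T(2) by auto
      thus ?thesis using T(3) negligible_imp_measurable[OF negE] by (metis fmeasurable.Un)
    qed
    have mT: "measure lebesgue T < d"
    proof -
      have "measure lebesgue T \<le> measure lebesgue (T - E) + measure lebesgue E"
      proof -
        have "measure lebesgue (E \<union> T) = measure lebesgue E + measure lebesgue (T - E)"
          by (rule measure_Un2[OF negligible_imp_measurable[OF negE] Tm])
        moreover have "E \<union> T = T" using T(2) by auto
        ultimately show ?thesis by simp
      qed
      moreover have "measure lebesgue E = 0" using negE negligible_imp_measure0 by blast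
      moreover have "measure lebesgue (T - E) < d"
        using T(3,4) by (simp add: emeasure_eq_measure2 ennreal_less_iff)
      ultimately show ?thesis by linarith
    qed
    have "\<forall>x. \<exists>r>0. x \<in> E \<longrightarrow> ball x r \<subseteq> T" using T(1,2) open_contains_ball by blast
    then obtain r where r: "\<And>x. r x > 0" "\<And>x. x \<in> E \<Longrightarrow> ball x (r x) \<subseteq> T" by metis
    have "\<forall>x. \<exists>\<delta>>0. x \<in> {a..b} \<and> x \<notin> E \<longrightarrow>
         (\<forall>y\<in>{a..b}. norm (y-x) < \<delta> \<longrightarrow> norm (F y - F x - (y-x) *\<^sub>R f x) \<le> \<epsilon> * norm (y-x))"
    proof
      fix x
      show "\<exists>\<delta>>0. x \<in> {a..b} \<and> x \<notin> E \<longrightarrow>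
         (\<forall>y\<in>{a..b}. norm (y-x) < \<delta> \<longrightarrow> norm (F y - F x - (y-x) *\<^sub>R f x) \<le> \<epsilon> * norm (y-x))"
      proof (cases "x \<in> {a..b} \<and> x \<notin> E")
        case True
        then show ?thesis
          using der[of x, unfolded has_vector_derivative_def has_derivative_within_alt] \<epsilon> by blast
      next
        case False
        then show ?thesis by (intro exI[of _ 1]) auto
      qed
    qed
    then obtain \<delta> where \<delta>: "\<And>x. \<delta> x > 0"
      "\<And>x y. x \<in> {a..b} \<Longrightarrow> x \<notin> E \<Longrightarrow> y \<in> {a..b} \<Longrightarrow> norm (y-x) < \<delta> x \<Longrightarrow>
          norm (F y - F x - (y-x) *\<^sub>R f x) \<le> \<epsilon> * norm (y-x)"
      by metis
    define \<gamma> where "\<gamma> x = (if x \<in> E then ball x (r x) else ball x (\<delta> x))" for x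
    have gauge: "gauge \<gamma>" unfolding gauge_def \<gamma>_def using r(1) \<delta>(1) by auto
    show "\<exists>\<gamma>. gauge \<gamma> \<and> (\<forall>\<D>. \<D> tagged_division_of {a..b} \<and> \<gamma> fine \<D> \<longrightarrow>
        norm ((\<Sum>(x,k)\<in>\<D>. measure lborel k *\<^sub>R g x) - (F b - F a)) < e)"
    proof (intro exI conjI allI impI)
      show "gauge \<gamma>" by (rule gauge)
      fix p assume pp: "p tagged_division_of {a..b} \<and> \<gamma> fine p"
      hence ptag: "p tagged_division_of {a..b}" and fine: "\<gamma> fine p" by auto
      have finp: "finite p" using ptag by blast
      have pK: "\<And>x K. (x,K) \<in> p \<Longrightarrow> x \<in> K \<and> K \<subseteq> {a..b} \<and> K \<subseteq> \<gamma> x \<and> (\<exists>u v. K = {u..v} \<and> u \<le> v)"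
      proof -
        fix x K assume xK: "(x,K) \<in> p"
        have "x \<in> K" "K \<subseteq> {a..b}" using ptag xK by blast+
        moreover obtain u v where "K = cbox u v" using ptag xK by blast
        moreover have "K \<subseteq> \<gamma> x" using fine xK by (auto simp: fine_def)
        ultimately show "x \<in> K \<and> K \<subseteq> {a..b} \<and> K \<subseteq> \<gamma> x \<and> (\<exists>u v. K = {u..v} \<and> u \<le> v)"
          by auto
      qed
      define I where "I = {i \<in> p. fst i \<in> E \<and> measure lborel (snd i) \<noteq> 0}"
      have finI: "finite I" using finp unfolding I_def by simp
      have ba: "b - a = (\<Sum>(x,K)\<in>p. Sup K - Inf K)" "F b - F a = (\<Sum>(x,K)\<in>p. F(Sup K) - F(Inf K))"
        using additive_tagged_division_1[where f= "\<lambda>x. x"] additive_tagged_division_1[where f= F]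
              ab ptag by auto
      have trm: "norm (measure lborel K *\<^sub>R g x - (F (Sup K) - F (Inf K))) \<le>
            \<epsilon> * (Sup K - Inf K) + (if (x,K) \<in> I then norm (F (Sup K) - F (Inf K)) else 0)"
        if xK: "(x,K) \<in> p" for x K
      proof -
        obtain u v where K: "K = {u..v}" "u \<le> v" and xK': "x \<in> K" "K \<subseteq> {a..b}" "K \<subseteq> \<gamma> x"
          using pK[OF xK] by blast
        have SI: "Sup K = v" "Inf K = u" "measure lborel K = v - u" using K by auto
        show ?thesis
        proof (cases "x \<in> E")
          case True
          show ?thesis
          proof (cases "u = v")
            case True
            thus ?thesis using SI \<epsilon> by simp
          next
            case False
            hence "(x,K) \<in> I" using \<open>x \<in> E\<close> xK K unfolding I_def by auto
            thus ?thesis using \<open>x \<in> E\<close> SI K \<epsilon> by (simp add: g_def norm_minus_commute)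
          qed
        next
          case False
          hence nI: "(x,K) \<notin> I" unfolding I_def by auto
          have ball: "K \<subseteq> ball x (\<delta> x)" using xK'(3) False by (simp add: \<gamma>_def)
          have "u \<in> K" "v \<in> K" using K by auto
          have xab: "x \<in> {a..b}" using xK' by auto
          have "norm ((v - u) *\<^sub>R f x - (F v - F u)) = norm (F u - F x - (u - x) *\<^sub>R f x - (F v - F x - (v - x) *\<^sub>R f x))"
            by (auto simp: algebra_simps)
          also have "\<dots> \<le> norm (F u - F x - (u - x) *\<^sub>R f x) + norm (F v - F x - (v - x) *\<^sub>R f x)"
            by (rule norm_triangle_ineq4)
          also have "\<dots> \<le> \<epsilon> * norm (u - x) + \<epsilon> * norm (v - x)"
          proof (rule add_mono)
            show "norm (F u - F x - (u - x) *\<^sub>R f x) \<le> \<epsilon> * norm (u - x)"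
              by (rule \<delta>(2)) (use xab False \<open>u \<in> K\<close> ball xK' in \<open>auto simp: dist_real_def\<close>)
            show "norm (F v - F x - (v - x) *\<^sub>R f x) \<le> \<epsilon> * norm (v - x)"
              by (rule \<delta>(2)) (use xab False \<open>v \<in> K\<close> ball xK' in \<open>auto simp: dist_real_def\<close>)
          qed
          also have "\<dots> = \<epsilon> * (v - u)"
            using \<open>x \<in> K\<close> K by (auto simp: field_simps)
          finally show ?thesis using nI SI False by (simp add: g_def)
        qed
      qed
      have sumI: "(\<Sum>i\<in>I. norm (F (Sup (snd i)) - F (Inf (snd i)))) < e / 2"
      proof (rule dH[OF finI])
        show "\<forall>i\<in>I. a \<le> Inf (snd i) \<and> Inf (snd i) \<le> Sup (snd i) \<and> Sup (snd i) \<le> b"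
        proof
          fix i assume "i \<in> I"
          hence "i \<in> p" unfolding I_def by auto
          then obtain u v where "snd i = {u..v}" "u \<le> v" "snd i \<subseteq> {a..b}"
            using pK[of "fst i" "snd i"] by auto
          thus "a \<le> Inf (snd i) \<and> Inf (snd i) \<le> Sup (snd i) \<and> Sup (snd i) \<le> b" by auto
        qed
        have disj: "\<forall>i\<in>I. \<forall>j\<in>I. i \<noteq> j \<longrightarrow> Sup (snd i) \<le> Inf (snd j) \<or> Sup (snd j) \<le> Inf (snd i)"
        proof (intro ballI impI)
          fix i j assume ij: "i \<in> I" "j \<in> I" "i \<noteq> j"
          obtain x K y L where eq: "i = (x,K)" "j = (y,L)" by fastforce
          have inp: "(x,K) \<in> p" "(y,L) \<in> p" "measure lborel K \<noteq> 0" "measure lborel L \<noteq> 0" using ij eq unfolding I_def by auto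
          obtain u v where K: "K = {u..v}" "u \<le> v" using pK[OF inp(1)] by blast
          obtain u' v' where L: "L = {u'..v'}" "u' \<le> v'" using pK[OF inp(2)] by blast
          have "u < v" "u' < v'" using K L inp by auto
          moreover have "interior K \<inter> interior L = {}"
            using tagged_division_ofD(5)[OF ptag inp(1,2)] ij eq by auto
          ultimately have "v \<le> u' \<or> v' \<le> u" using interiors_disj K L by blast
          thus "Sup (snd i) \<le> Inf (snd j) \<or> Sup (snd j) \<le> Inf (snd i)" using K L eq by auto
        qed
        show "\<forall>i\<in>I. \<forall>j\<in>I. i \<noteq> j \<longrightarrow> Sup (snd i) \<le> Inf (snd j) \<or> Sup (snd j) \<le> Inf (snd i)"
          by (rule disj)
        have KI: "\<And>i. i \<in> I \<Longrightarrow> \<exists>u v. snd i = {u..v} \<and> u \<le> v \<and> snd i \<subseteq> T"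
        proof -
          fix i assume "i \<in> I"
          hence ip: "i \<in> p" "fst i \<in> E" unfolding I_def by auto
          then obtain u v where "snd i = {u..v}" "u \<le> v" "snd i \<subseteq> \<gamma> (fst i)"
            using pK[of "fst i" "snd i"] by auto
          moreover have "\<gamma> (fst i) \<subseteq> T" using ip r(2) by (simp add: \<gamma>_def)
          ultimately show "\<exists>u v. snd i = {u..v} \<and> u \<le> v \<and> snd i \<subseteq> T" by blast
        qed
        have "(\<Sum>i\<in>I. Sup (snd i) - Inf (snd i)) = (\<Sum>i\<in>I. measure lebesgue (snd i))"
        proof (rule sum.cong)
          fix i assume "i \<in> I"
          then obtain u v where "snd i = {u..v}" "u \<le> v" using KI by blast
          thus "Sup (snd i) - Inf (snd i) = measure lebesgue (snd i)" by simp
        qed simp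
        also have "\<dots> = measure lebesgue (\<Union>(snd ` I))"
        proof (rule measure_negligible_finite_Union_image[symmetric, OF finI])
          fix i assume "i \<in> I"
          then obtain u v where "snd i = {u..v}" using KI by blast
          thus "snd i \<in> lmeasurable" by simp
        next
          show "pairwise (\<lambda>i j. negligible (snd i \<inter> snd j)) I"
            unfolding pairwise_def
          proof (intro ballI impI)
            fix i j assume ij: "i \<in> I" "j \<in> I" "i \<noteq> j"
            obtain u v where K: "snd i = {u..v}" "u \<le> v" using KI ij by blast
            obtain u' v' where L: "snd j = {u'..v'}" "u' \<le> v'" using KI ij by blast
            have "Sup (snd i) \<le> Inf (snd j) \<or> Sup (snd j) \<le> Inf (snd i)" using disj ij by blast
            hence "v \<le> u' \<or> v' \<le> u" using K L by simp
            hence "snd i \<inter> snd j \<subseteq> {v, u}" using K L by auto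
            thus "negligible (snd i \<inter> snd j)"
              by (meson negligible_subset negligible_finite finite.insertI finite.emptyI)
          qed
        qed
        also have "\<dots> \<le> measure lebesgue T"
        proof (rule measure_mono_fmeasurable)
          show "\<Union>(snd ` I) \<subseteq> T" using KI by blast
          show "\<Union>(snd ` I) \<in> sets lebesgue"
          proof (rule sets.finite_UN[OF finI])
            fix i assume "i \<in> I"
            then obtain u v where "snd i = {u..v}" using KI by blast
            thus "snd i \<in> sets lebesgue" by simp
          qed
          show "T \<in> lmeasurable" by (rule Tm)
        qed
        finally show "(\<Sum>i\<in>I. Sup (snd i) - Inf (snd i)) < d" using mT by linarith
      qed
      have "norm ((\<Sum>(x,K)\<in>p. measure lborel K *\<^sub>R g x) - (F b - F a))
          = norm (\<Sum>(x,K)\<in>p. measure lborel K *\<^sub>R g x - (F (Sup K) - F (Inf K)))"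
        by (simp add: ba(2) split_def sum_subtractf)
      also have "\<dots> \<le> (\<Sum>(x,K)\<in>p. \<epsilon> * (Sup K - Inf K) + (if (x,K) \<in> I then norm (F (Sup K) - F (Inf K)) else 0))"
        by (rule sum_norm_le) (use trm in auto)
      also have "\<dots> = \<epsilon> * (b - a) + (\<Sum>i\<in>I. norm (F (Sup (snd i)) - F (Inf (snd i))))"
      proof -
        have "(\<Sum>(x,K)\<in>p. (if (x,K) \<in> I then norm (F (Sup K) - F (Inf K)) else 0))
            = (\<Sum>i\<in>p. (if i \<in> I then norm (F (Sup (snd i)) - F (Inf (snd i))) else 0))"
          by (simp add: split_def)
        also have "\<dots> = (\<Sum>i\<in>I. norm (F (Sup (snd i)) - F (Inf (snd i))))"
          by (simp add: sum.If_cases finp I_def Int_def)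
        finally show ?thesis
          by (simp add: sum.distrib ba(1) sum_distrib_left split_def)
      qed
      also have "\<dots> < e"
      proof -
        have "\<epsilon> * (b - a) \<le> e / 2"
          using e ab by (simp add: \<epsilon>_def field_simps)
        thus ?thesis using sumI by linarith
      qed
      finally show "norm ((\<Sum>(x,K)\<in>p. measure lborel K *\<^sub>R g x) - (F b - F a)) < e" .
    qed
  qed
  thus ?thesis
    by (rule has_integral_spike[OF negE, rotated]) (simp add: g_def)
qed

lemma ac_mult:
  fixes F G :: "real \<Rightarrow> 'a::real_normed_algebra"
  assumes acF: "abs_cont_on a b F" and acG: "abs_cont_on a b G" and M: "M > 0"
    and bF: "\<And>x. x \<in> {a..b} \<Longrightarrow> norm (F x) \<le> M" and bG: "\<And>x. x \<in> {a..b} \<Longrightarrow> norm (G x) \<le> M"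
  shows "abs_cont_on a b (\<lambda>x. F x * G x)"
  unfolding abs_cont_on_def
proof (intro allI impI)
  fix e :: real assume e: "e > 0"
  have e2: "e / (2 * M) > 0" using e M by simp
  obtain d1 where d1: "d1 > 0" and H1: "\<forall>(n::nat) (s::nat\<Rightarrow>real) (t::nat\<Rightarrow>real). (\<forall>k<n. a \<le> s k \<and> s k \<le> t k \<and> t k \<le> b) \<and>
        (\<forall>i<n. \<forall>j<n. i \<noteq> j \<longrightarrow> t i \<le> s j \<or> t j \<le> s i) \<and>
        (\<Sum>k<n. t k - s k) < d1 \<longrightarrow> (\<Sum>k<n. norm (F (t k) - F (s k))) < e / (2 * M)"
    using acF[unfolded abs_cont_on_def, rule_format, OF e2] by (elim exE conjE) (rule that)
  obtain d2 where d2: "d2 > 0" and H2: "\<forall>(n::nat) (s::nat\<Rightarrow>real) (t::nat\<Rightarrow>real). (\<forall>k<n. a \<le> s k \<and> s k \<le> t k \<and> t k \<le> b) \<and>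
        (\<forall>i<n. \<forall>j<n. i \<noteq> j \<longrightarrow> t i \<le> s j \<or> t j \<le> s i) \<and>
        (\<Sum>k<n. t k - s k) < d2 \<longrightarrow> (\<Sum>k<n. norm (G (t k) - G (s k))) < e / (2 * M)"
    using acG[unfolded abs_cont_on_def, rule_format, OF e2] by (elim exE conjE) (rule that)
  show "\<exists>\<delta>>0. \<forall>(n::nat) (s::nat\<Rightarrow>real) (t::nat\<Rightarrow>real). (\<forall>k<n. a \<le> s k \<and> s k \<le> t k \<and> t k \<le> b) \<and>
        (\<forall>i<n. \<forall>j<n. i \<noteq> j \<longrightarrow> t i \<le> s j \<or> t j \<le> s i) \<and>
        (\<Sum>k<n. t k - s k) < \<delta> \<longrightarrow> (\<Sum>k<n. norm (F (t k) * G (t k) - F (s k) * G (s k))) < e"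
  proof (intro exI conjI allI impI)
    show "min d1 d2 > 0" using d1 d2 by simp
    fix n :: nat and s t :: "nat \<Rightarrow> real"
    assume A: "(\<forall>k<n. a \<le> s k \<and> s k \<le> t k \<and> t k \<le> b) \<and>
        (\<forall>i<n. \<forall>j<n. i \<noteq> j \<longrightarrow> t i \<le> s j \<or> t j \<le> s i) \<and>
        (\<Sum>k<n. t k - s k) < min d1 d2"
    have SF: "(\<Sum>k<n. norm (F (t k) - F (s k))) < e / (2 * M)" using H1 A by auto
    have SG: "(\<Sum>k<n. norm (G (t k) - G (s k))) < e / (2 * M)" using H2 A by auto
    have "(\<Sum>k<n. norm (F (t k) * G (t k) - F (s k) * G (s k)))
        \<le> (\<Sum>k<n. M * norm (G (t k) - G (s k)) + M * norm (F (t k) - F (s k)))"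
    proof (rule sum_mono)
      fix k assume "k \<in> {..<n}"
      hence st: "s k \<in> {a..b}" "t k \<in> {a..b}" using A by auto
      have "F (t k) * G (t k) - F (s k) * G (s k) = F (t k) * (G (t k) - G (s k)) + (F (t k) - F (s k)) * G (s k)"
        by (simp add: algebra_simps)
      hence "norm (F (t k) * G (t k) - F (s k) * G (s k)) \<le> norm (F (t k)) * norm (G (t k) - G (s k)) + norm (F (t k) - F (s k)) * norm (G (s k))"
        by (metis norm_triangle_le norm_mult_ineq add_mono)
      also have "\<dots> \<le> M * norm (G (t k) - G (s k)) + M * norm (F (t k) - F (s k))"
      proof (rule add_mono)
        show "norm (F (t k)) * norm (G (t k) - G (s k)) \<le> M * norm (G (t k) - G (s k))"
          by (rule mult_right_mono) (use bF st in auto)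
        show "norm (F (t k) - F (s k)) * norm (G (s k)) \<le> M * norm (F (t k) - F (s k))"
          using mult_left_mono[OF bG[OF st(1)] norm_ge_zero[of "F (t k) - F (s k)"]] by (simp add: mult.commute)
      qed
      finally show "norm (F (t k) * G (t k) - F (s k) * G (s k)) \<le> M * norm (G (t k) - G (s k)) + M * norm (F (t k) - F (s k))" .
    qed
    also have "\<dots> = M * (\<Sum>k<n. norm (G (t k) - G (s k))) + M * (\<Sum>k<n. norm (F (t k) - F (s k)))"
      by (simp add: sum.distrib sum_distrib_left)
    also have "\<dots> < M * (e / (2 * M)) + M * (e / (2 * M))"
      using SF SG M by (intro add_strict_mono mult_strict_left_mono) auto
    also have "\<dots> = e" using M by (simp add: field_simps)
    finally show "(\<Sum>k<n. norm (F (t k) * G (t k) - F (s k) * G (s k))) < e" .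
  qed
qed

lemma ac_cnj:
  assumes "abs_cont_on a b F"
  shows "abs_cont_on a b (\<lambda>x. cnj (F x))"
  using assms unfolding abs_cont_on_def
  by (simp only: complex_cnj_diff[symmetric] complex_mod_cnj)

lemma int_mult_cont:
  fixes f c :: "real \<Rightarrow> real"
  assumes f: "set_integrable lborel S f" and S: "S \<in> sets borel" and c: "continuous_on S c"
    and K: "\<And>x. x \<in> S \<Longrightarrow> \<bar>c x\<bar> \<le> K"
  shows "set_integrable lborel S (\<lambda>x. f x * c x)"
  unfolding set_integrable_def
proof (rule Bochner_Integration.integrable_bound)
  show "integrable lborel (\<lambda>x. K *\<^sub>R (indicator S x *\<^sub>R f x))"
    using f unfolding set_integrable_def by simp
  have m1: "(\<lambda>x. indicator S x *\<^sub>R f x) \<in> borel_measurable lborel"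
    using f unfolding set_integrable_def by (rule borel_measurable_integrable)
  have m2: "(\<lambda>x. indicator S x *\<^sub>R c x) \<in> borel_measurable lborel"
    using borel_measurable_continuous_on_indicator[OF S c] by simp
  have "(\<lambda>x. (indicator S x *\<^sub>R f x) * (indicator S x *\<^sub>R c x)) \<in> borel_measurable lborel"
    using m1 m2 by (rule borel_measurable_times)
  moreover have "(\<lambda>x. (indicator S x *\<^sub>R f x) * (indicator S x *\<^sub>R c x)) = (\<lambda>x. indicator S x *\<^sub>R (f x * c x))"
    by (auto simp: indicator_def fun_eq_iff)
  ultimately show "(\<lambda>x. indicator S x *\<^sub>R (f x * c x)) \<in> borel_measurable lborel" by simp
  show "AE x in lborel. norm (indicator S x *\<^sub>R (f x * c x)) \<le> norm (K *\<^sub>R (indicator S x *\<^sub>R f x))"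
  proof (rule AE_I2)
    fix x show "norm (indicator S x *\<^sub>R (f x * c x)) \<le> norm (K *\<^sub>R (indicator S x *\<^sub>R f x))"
    proof (cases "x \<in> S")
      case True
      have "\<bar>f x\<bar> * \<bar>c x\<bar> \<le> \<bar>f x\<bar> * \<bar>K\<bar>" using K[OF True] by (intro mult_left_mono) auto
      thus ?thesis using True by (simp add: abs_mult mult.commute)
    qed simp
  qed
qed

lemma lbint_conv:
  fixes f :: "real \<Rightarrow> real"
  assumes "set_integrable lborel {-1..1} f"
  shows "(LBINT x=-1..1. f x) = integral {-1..1} f" "f integrable_on {-1..1}"
proof -
  have "(LBINT x=-1..1. f x) = (LBINT x : {-1..1}. f x)"
    using interval_integral_Icc[of "-1" 1 f] by (simp add: one_ereal_def)
  also have "\<dots> = integral {-1..1} f" by (rule set_borel_integral_eq_integral(2)[OF assms])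
  finally show "(LBINT x=-1..1. f x) = integral {-1..1} f" .
  show "f integrable_on {-1..1}" by (rule set_borel_integral_eq_integral(1)[OF assms])
qed

lemma amgm: fixes a b c :: real assumes "c > 0" shows "2 * a * b \<le> c * a\<^sup>2 + b\<^sup>2 / c"
proof -
  have "c * a\<^sup>2 + b\<^sup>2 / c - 2 * a * b = (c * a - b)\<^sup>2 / c"
    using assms by (simp add: field_simps power2_eq_square)
  moreover have "(c * a - b)\<^sup>2 / c \<ge> 0" using assms by simp
  ultimately show ?thesis by linarith
qed

theorem mainTheorem6:
  fixes q w :: "real \<Rightarrow> real" and lam :: complex and \<phi> \<phi>' :: "real \<Rightarrow> complex"
  assumes q_L1: "set_integrable lborel {-1..1} q"
    and w_L1: "set_integrable lborel {-1..1} w"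
    and w_ne: "AE x in lborel. x \<in> {-1..1} \<longrightarrow> w x \<noteq> 0"
    and nonreal: "lam \<notin> \<real>"
    and deriv: "\<forall>x\<in>{-1..1}. (\<phi> has_vector_derivative \<phi>' x) (at x within {-1..1})"
    and ac: "abs_cont_on (-1) 1 \<phi>" "abs_cont_on (-1) 1 \<phi>'"
    and ode: "AE x in lborel. x \<in> {-1..1} \<longrightarrow>
               (\<exists>y2. (\<phi>' has_vector_derivative y2) (at x within {-1..1}) \<and>
                     - y2 + of_real (q x) * \<phi> x = lam * of_real (w x) * \<phi> x)"
    and bc: "\<phi> (-1) = 0" "\<phi> 1 = 0"
    and norm1: "(LBINT x=-1..1. (cmod (\<phi> x))\<^sup>2) = 1"
  shows "set_integrable lborel {-1..1} (\<lambda>x. w x * (cmod (\<phi> x))\<^sup>2)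
       \<and> (LBINT x=-1..1. w x * (cmod (\<phi> x))\<^sup>2) = 0
       \<and> set_integrable lborel {-1..1} (\<lambda>x. (cmod (\<phi>' x))\<^sup>2 + q x * (cmod (\<phi> x))\<^sup>2)
       \<and> (LBINT x=-1..1. (cmod (\<phi>' x))\<^sup>2 + q x * (cmod (\<phi> x))\<^sup>2) = 0
       \<and> set_integrable lborel {-1..1} (\<lambda>x. (cmod (\<phi>' x))\<^sup>2)
       \<and> (LBINT x=-1..1. (cmod (\<phi>' x))\<^sup>2) \<le> 4 * (LBINT x=-1..1. neg_part q x)\<^sup>2
       \<and> set_integrable lborel {-1..1} (\<lambda>x. neg_part q x * (cmod (\<phi> x))\<^sup>2)
       \<and> (LBINT x=-1..1. neg_part q x * (cmod (\<phi> x))\<^sup>2) \<le> 4 * (LBINT x=-1..1. neg_part q x)\<^sup>2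
       \<and> (\<forall>x\<in>{-1..1}. (cmod (\<phi> x))\<^sup>2 \<le> (LBINT t=-1..1. (cmod (\<phi>' t))\<^sup>2))"
proof -
  have cphi: "continuous_on {-1..1} \<phi>"
    by (rule continuous_on_vector_derivative) (use deriv in auto)
  have cphi': "continuous_on {-1..1} \<phi>'" by (rule ac_continuous[OF ac(2)])
  obtain B1 where B1: "B1 > 0" "\<forall>x\<in>{-1..1}. norm (\<phi> x) \<le> B1"
    using compact_imp_bounded[OF compact_continuous_image[OF cphi compact_Icc]] by (auto simp: bounded_pos)
  obtain B2 where B2: "B2 > 0" "\<forall>x\<in>{-1..1}. norm (\<phi>' x) \<le> B2"
    using compact_imp_bounded[OF compact_continuous_image[OF cphi' compact_Icc]] by (auto simp: bounded_pos)
  define M where "M = B1 + B2"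
  have M: "M > 0" "\<And>x. x \<in> {-1..1} \<Longrightarrow> cmod (\<phi> x) \<le> M" "\<And>x. x \<in> {-1..1} \<Longrightarrow> cmod (\<phi>' x) \<le> M"
    using B1 B2 unfolding M_def by force+
  obtain N where negN: "negligible N" and odeN: "\<And>x. x \<notin> N \<Longrightarrow> x \<in> {-1..1} \<longrightarrow>
               (\<exists>y2. (\<phi>' has_vector_derivative y2) (at x within {-1..1}) \<and>
                     - y2 + of_real (q x) * \<phi> x = lam * of_real (w x) * \<phi> x)"
    by (rule AE_negligible[OF ode]) (rule that; assumption)
  define A where "A x = (cmod (\<phi>' x))\<^sup>2 + q x * (cmod (\<phi> x))\<^sup>2" for x
  define B where "B x = w x * (cmod (\<phi> x))\<^sup>2" for x
  define h where "h x = complex_of_real (A x) - lam * complex_of_real (B x)" for x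
  have Hder: "((\<lambda>x. \<phi>' x * cnj (\<phi> x)) has_vector_derivative h x) (at x within {-1..1})"
    if x: "x \<in> {-1..1}" "x \<notin> N" for x
  proof -
    obtain y2 where y2: "(\<phi>' has_vector_derivative y2) (at x within {-1..1})"
        "- y2 + of_real (q x) * \<phi> x = lam * of_real (w x) * \<phi> x"
      using odeN[OF x(2)] x(1) by blast
    have d: "((\<lambda>x. \<phi>' x * cnj (\<phi> x)) has_vector_derivative (\<phi>' x * cnj (\<phi>' x) + y2 * cnj (\<phi> x))) (at x within {-1..1})"
      by (rule has_vector_derivative_mult[OF y2(1) has_vector_derivative_cnj[OF deriv[rule_format, OF x(1)]]])
    have y2e: "y2 = of_real (q x) * \<phi> x - lam * of_real (w x) * \<phi> x"
      by (simp add: y2(2)[symmetric])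
    have "h x = of_real ((cmod (\<phi>' x))\<^sup>2) + of_real (q x) * of_real ((cmod (\<phi> x))\<^sup>2)
              - lam * (of_real (w x) * of_real ((cmod (\<phi> x))\<^sup>2))"
      unfolding h_def A_def B_def by (simp only: of_real_add of_real_mult)
    also have "\<dots> = \<phi>' x * cnj (\<phi>' x) + of_real (q x) * (\<phi> x * cnj (\<phi> x))
              - lam * (of_real (w x) * (\<phi> x * cnj (\<phi> x)))"
      by (simp only: complex_norm_square)
    also have "\<dots> = \<phi>' x * cnj (\<phi>' x) + y2 * cnj (\<phi> x)"
      by (simp add: y2e algebra_simps)
    finally show ?thesis using d by simp
  qed
  have acH: "abs_cont_on (-1) 1 (\<lambda>x. \<phi>' x * cnj (\<phi> x))"
    by (rule ac_mult[OF ac(2) ac_cnj[OF ac(1)] M(1)]) (use M in auto)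
  have hint: "(h has_integral 0) {-1..1}"
    using ac_ftc[OF _ acH negN Hder] bc by simp
  have cn: "continuous_on {-1..1} (\<lambda>x. (cmod (\<phi> x))\<^sup>2)" using cphi by (intro continuous_intros)
  have cn': "continuous_on {-1..1} (\<lambda>x. (cmod (\<phi>' x))\<^sup>2)" using cphi' by (intro continuous_intros)
  have bn: "\<bar>(cmod (\<phi> x))\<^sup>2\<bar> \<le> M\<^sup>2" if "x \<in> {-1..1}" for x
    using power_mono[OF M(2)[OF that] norm_ge_zero] by simp
  have Sb: "{-1..1::real} \<in> sets borel" by simp
  have iB: "set_integrable lborel {-1..1} B" unfolding B_def by (rule int_mult_cont[OF w_L1 Sb cn bn])
  have iqp: "set_integrable lborel {-1..1} (\<lambda>x. q x * (cmod (\<phi> x))\<^sup>2)" by (rule int_mult_cont[OF q_L1 Sb cn bn])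
  have ip': "set_integrable lborel {-1..1} (\<lambda>x. (cmod (\<phi>' x))\<^sup>2)"
    using borel_integrable_compact[OF compact_Icc cn'] unfolding set_integrable_def .
  have ip: "set_integrable lborel {-1..1} (\<lambda>x. (cmod (\<phi> x))\<^sup>2)"
    using borel_integrable_compact[OF compact_Icc cn] unfolding set_integrable_def .
  have iA: "set_integrable lborel {-1..1} A" unfolding A_def by (rule set_integral_add(1)[OF ip' iqp])
  have negq_eq: "neg_part q = (\<lambda>x. (1/2) * (\<bar>q x\<bar> - q x))"
    by (auto simp: neg_part_def fun_eq_iff min_def)
  have iQ: "set_integrable lborel {-1..1} (neg_part q)"
    unfolding negq_eq by (intro set_integrable_mult_right set_integral_diff(1) set_integrable_abs q_L1)
  have iP: "set_integrable lborel {-1..1} (\<lambda>x. neg_part q x * (cmod (\<phi> x))\<^sup>2)"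
    by (rule int_mult_cont[OF iQ Sb cn bn])
  have A_has: "(A has_integral integral {-1..1} A) {-1..1}"
    using lbint_conv(2)[OF iA] by (rule integrable_integral)
  have B_has: "(B has_integral integral {-1..1} B) {-1..1}"
    using lbint_conv(2)[OF iB] by (rule integrable_integral)
  have A_c: "((\<lambda>x. complex_of_real (A x)) has_integral complex_of_real (integral {-1..1} A)) {-1..1}"
    using has_integral_linear[OF A_has bounded_linear_of_real] by (simp add: o_def)
  have B_c: "((\<lambda>x. complex_of_real (B x)) has_integral complex_of_real (integral {-1..1} B)) {-1..1}"
    using has_integral_linear[OF B_has bounded_linear_of_real] by (simp add: o_def)
  have "(h has_integral (of_real (integral {-1..1} A) - lam * of_real (integral {-1..1} B))) {-1..1}"
    unfolding h_def by (rule has_integral_diff[OF A_c has_integral_mult_right[OF B_c]])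
  hence eq0: "of_real (integral {-1..1} A) - lam * of_real (integral {-1..1} B) = 0"
    using hint has_integral_unique by blast
  have Imlam: "Im lam \<noteq> 0" using nonreal complex_is_Real_iff by blast
  have "Im (of_real (integral {-1..1} A) - lam * of_real (integral {-1..1} B)) = - (Im lam * integral {-1..1} B)"
    by simp
  hence IB0: "integral {-1..1} B = 0" using eq0 Imlam by simp
  hence IA0: "integral {-1..1} A = 0" using eq0 by simp
  define D where "D = integral {-1..1} (\<lambda>x. (cmod (\<phi>' x))\<^sup>2)"
  define Q where "Q = integral {-1..1} (neg_part q)"
  define P where "P = integral {-1..1} (\<lambda>x. neg_part q x * (cmod (\<phi> x))\<^sup>2)"
  have I1: "integral {-1..1} (\<lambda>x. (cmod (\<phi> x))\<^sup>2) = 1" using norm1 lbint_conv(1)[OF ip] by simp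
  have "integral {-1..1} A = D + integral {-1..1} (\<lambda>x. q x * (cmod (\<phi> x))\<^sup>2)"
    unfolding A_def D_def
    by (rule Henstock_Kurzweil_Integration.integral_add[OF lbint_conv(2)[OF ip'] lbint_conv(2)[OF iqp]])
  hence Dq: "D = - integral {-1..1} (\<lambda>x. q x * (cmod (\<phi> x))\<^sup>2)" using IA0 by simp
  have D0: "D \<ge> 0" unfolding D_def by (rule integral_nonneg[OF lbint_conv(2)[OF ip']]) simp
  have Q0: "Q \<ge> 0" unfolding Q_def by (rule integral_nonneg[OF lbint_conv(2)[OF iQ]]) (simp add: neg_part_def)
  have intJ: "\<And>a b. -1 \<le> a \<Longrightarrow> b \<le> 1 \<Longrightarrow> f integrable_on {a..b}" if "continuous_on {-1..1} f" for f :: "real \<Rightarrow> real"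
    using that by (meson atLeastatMost_subset_iff continuous_on_subset integrable_continuous_interval order_refl)
  have Gder: "((\<lambda>y. \<phi> y * cnj (\<phi> y)) has_vector_derivative (\<phi> y * cnj (\<phi>' y) + \<phi>' y * cnj (\<phi> y))) (at y within {-1..1})"
    if "y \<in> {-1..1}" for y
    using has_vector_derivative_mult[OF deriv[rule_format, OF that] has_vector_derivative_cnj[OF deriv[rule_format, OF that]]] .
  have pw1: "(cmod (\<phi> x))\<^sup>2 \<le> (c + D / c) / 2" if x: "x \<in> {-1..1}" and c: "c > 0" for x c
  proof -
    define J where "J y = 2 * cmod (\<phi> y) * cmod (\<phi>' y)" for y
    have cJ: "continuous_on {-1..1} J" unfolding J_def using cphi cphi' by (intro continuous_intros)
    let ?g = "\<lambda>y. \<phi> y * cnj (\<phi>' y) + \<phi>' y * cnj (\<phi> y)"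
    have cg: "continuous_on {-1..1} ?g" using cphi cphi' by (intro continuous_intros)
    have normg: "norm (?g y) \<le> J y" for y
    proof -
      have "norm (?g y) \<le> norm (\<phi> y * cnj (\<phi>' y)) + norm (\<phi>' y * cnj (\<phi> y))" by (rule norm_triangle_ineq)
      thus ?thesis by (simp add: J_def norm_mult)
    qed
    have gint: "?g integrable_on {a..b}" if "-1 \<le> a" "b \<le> 1" for a b
      using cg that by (meson atLeastatMost_subset_iff continuous_on_subset integrable_continuous_interval order_refl)
    have x1: "-1 \<le> x" "x \<le> 1" using x by auto
    have L: "(?g has_integral (\<phi> x * cnj (\<phi> x) - \<phi> (-1) * cnj (\<phi> (-1)))) {-1..x}"
    proof (rule fundamental_theorem_of_calculus)
      show "-1 \<le> x" by (rule x1)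
      fix y assume y: "y \<in> {-1..x}"
      hence "y \<in> {-1..1}" using x1 by auto
      thus "((\<lambda>y. \<phi> y * cnj (\<phi> y)) has_vector_derivative ?g y) (at y within {-1..x})"
        using has_vector_derivative_within_subset[OF Gder] x1 by auto
    qed
    have R: "(?g has_integral (\<phi> 1 * cnj (\<phi> 1) - \<phi> x * cnj (\<phi> x))) {x..1}"
    proof (rule fundamental_theorem_of_calculus)
      show "x \<le> 1" by (rule x1)
      fix y assume y: "y \<in> {x..1}"
      hence "y \<in> {-1..1}" using x1 by auto
      thus "((\<lambda>y. \<phi> y * cnj (\<phi> y)) has_vector_derivative ?g y) (at y within {x..1})"
        using has_vector_derivative_within_subset[OF Gder] x1 by auto
    qed
    have nx: "norm (\<phi> x * cnj (\<phi> x)) = (cmod (\<phi> x))\<^sup>2" by (simp add: norm_mult power2_eq_square)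
    have "norm (\<phi> x * cnj (\<phi> x)) = norm (integral {-1..x} ?g)" using integral_unique[OF L] bc by simp
    also have "\<dots> \<le> integral {-1..x} J"
      by (rule Henstock_Kurzweil_Integration.integral_norm_bound_integral[OF gint intJ[OF cJ]]) (use x1 normg in auto)
    finally have L1: "(cmod (\<phi> x))\<^sup>2 \<le> integral {-1..x} J" using nx by simp
    have "norm (\<phi> x * cnj (\<phi> x)) = norm (integral {x..1} ?g)" using integral_unique[OF R] bc by (simp add: norm_minus_commute)
    also have "\<dots> \<le> integral {x..1} J"
      by (rule Henstock_Kurzweil_Integration.integral_norm_bound_integral[OF gint intJ[OF cJ]]) (use x1 normg in auto)
    finally have R1: "(cmod (\<phi> x))\<^sup>2 \<le> integral {x..1} J" using nx by simp
    have comb: "integral {-1..x} J + integral {x..1} J = integral {-1..1} J"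
      by (rule Henstock_Kurzweil_Integration.integral_combine) (use x1 intJ[OF cJ] in auto)
    have "integral {-1..1} J \<le> integral {-1..1} (\<lambda>y. c * (cmod (\<phi> y))\<^sup>2 + (cmod (\<phi>' y))\<^sup>2 / c)"
    proof (rule integral_le)
      show "J integrable_on {-1..1}" using intJ[OF cJ] by simp
      have "continuous_on {-1..1} (\<lambda>y. c * (cmod (\<phi> y))\<^sup>2 + (cmod (\<phi>' y))\<^sup>2 / c)"
        using cphi cphi' c by (intro continuous_intros) auto
      thus "(\<lambda>y. c * (cmod (\<phi> y))\<^sup>2 + (cmod (\<phi>' y))\<^sup>2 / c) integrable_on {-1..1}" using intJ by simp
      fix y show "J y \<le> c * (cmod (\<phi> y))\<^sup>2 + (cmod (\<phi>' y))\<^sup>2 / c" unfolding J_def by (rule amgm[OF c])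
    qed
    also have "\<dots> = c * 1 + D / c"
      using Henstock_Kurzweil_Integration.integral_add[OF lbint_conv(2)[OF set_integrable_mult_right[OF ip]]
          lbint_conv(2)[OF set_integrable_mult_right[OF ip', of "1/c"]]] I1
      by (simp add: D_def)
    finally show ?thesis using L1 R1 comb by simp
  qed
  have pw2: "cmod (\<phi> x) \<le> (2 * c + D / c) / 4" if x: "x \<in> {-1..1}" and c: "c > 0" for x c
  proof -
    have x1: "-1 \<le> x" "x \<le> 1" using x by auto
    have nint: "(\<lambda>y. cmod (\<phi>' y)) integrable_on {-1..1}"
      using intJ[of "\<lambda>y. cmod (\<phi>' y)"] cphi' continuous_on_norm by auto
    have dint: "\<phi>' integrable_on {a..b}" if "-1 \<le> a" "b \<le> 1" for a b
      using cphi' that by (meson atLeastatMost_subset_iff continuous_on_subset integrable_continuous_interval order_refl)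
    have L: "(\<phi>' has_integral (\<phi> x - \<phi> (-1))) {-1..x}"
    proof (rule fundamental_theorem_of_calculus)
      show "-1 \<le> x" by (rule x1)
      fix y assume y: "y \<in> {-1..x}"
      hence "y \<in> {-1..1}" using x1 by auto
      thus "(\<phi> has_vector_derivative \<phi>' y) (at y within {-1..x})"
        using has_vector_derivative_within_subset[OF deriv[rule_format]] x1 by auto
    qed
    have R: "(\<phi>' has_integral (\<phi> 1 - \<phi> x)) {x..1}"
    proof (rule fundamental_theorem_of_calculus)
      show "x \<le> 1" by (rule x1)
      fix y assume y: "y \<in> {x..1}"
      hence "y \<in> {-1..1}" using x1 by auto
      thus "(\<phi> has_vector_derivative \<phi>' y) (at y within {x..1})"
        using has_vector_derivative_within_subset[OF deriv[rule_format]] x1 by auto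
    qed
    have "cmod (\<phi> x) = norm (integral {-1..x} \<phi>')" using integral_unique[OF L] bc by simp
    also have "\<dots> \<le> integral {-1..x} (\<lambda>y. cmod (\<phi>' y))"
      by (rule Henstock_Kurzweil_Integration.integral_norm_bound_integral[OF dint intJ])
         (use x1 cphi' continuous_on_norm in auto)
    finally have L1: "cmod (\<phi> x) \<le> integral {-1..x} (\<lambda>y. cmod (\<phi>' y))" .
    have "cmod (\<phi> x) = norm (integral {x..1} \<phi>')" using integral_unique[OF R] bc by (simp add: norm_minus_commute)
    also have "\<dots> \<le> integral {x..1} (\<lambda>y. cmod (\<phi>' y))"
      by (rule Henstock_Kurzweil_Integration.integral_norm_bound_integral[OF dint intJ])
         (use x1 cphi' continuous_on_norm in auto)
    finally have R1: "cmod (\<phi> x) \<le> integral {x..1} (\<lambda>y. cmod (\<phi>' y))" .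
    have comb: "integral {-1..x} (\<lambda>y. cmod (\<phi>' y)) + integral {x..1} (\<lambda>y. cmod (\<phi>' y)) = integral {-1..1} (\<lambda>y. cmod (\<phi>' y))"
      by (rule Henstock_Kurzweil_Integration.integral_combine) (use x1 nint in auto)
    have "integral {-1..1} (\<lambda>y. cmod (\<phi>' y)) \<le> integral {-1..1} (\<lambda>y. c / 2 + (cmod (\<phi>' y))\<^sup>2 / (2 * c))"
    proof (rule integral_le)
      show "(\<lambda>y. cmod (\<phi>' y)) integrable_on {-1..1}" by (rule nint)
      have "continuous_on {-1..1} (\<lambda>y. c / 2 + (cmod (\<phi>' y))\<^sup>2 / (2 * c))"
        using cphi' c by (intro continuous_intros) auto
      thus "(\<lambda>y. c / 2 + (cmod (\<phi>' y))\<^sup>2 / (2 * c)) integrable_on {-1..1}" using intJ by simp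
      fix y
      have "2 * 1 * cmod (\<phi>' y) \<le> c * 1\<^sup>2 + (cmod (\<phi>' y))\<^sup>2 / c" by (rule amgm[OF c])
      thus "cmod (\<phi>' y) \<le> c / 2 + (cmod (\<phi>' y))\<^sup>2 / (2 * c)" by (simp add: field_simps)
    qed
    also have "\<dots> = c + D / (2 * c)"
    proof -
      have "integral {-1..1} (\<lambda>y. c / 2 + (cmod (\<phi>' y))\<^sup>2 / (2 * c))
          = integral {-1..1} (\<lambda>y::real. c / 2) + integral {-1..1} (\<lambda>y. (cmod (\<phi>' y))\<^sup>2 / (2 * c))"
      proof -
        have i1: "(\<lambda>y::real. c / 2) integrable_on {-1..1}"
          by (rule integrable_continuous_interval) (rule continuous_on_const)
        have "continuous_on {-1..1} (\<lambda>y. (cmod (\<phi>' y))\<^sup>2 / (2 * c))"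
          using cphi' c by (intro continuous_intros) auto
        hence i2: "(\<lambda>y. (cmod (\<phi>' y))\<^sup>2 / (2 * c)) integrable_on {-1..1}"
          using intJ by simp
        show ?thesis using Henstock_Kurzweil_Integration.integral_add[OF i1 i2] by simp
      qed
      thus ?thesis by (simp add: D_def)
    qed
    finally show ?thesis using L1 R1 comb by (simp add: field_simps)
  qed
  have ptw: "(cmod (\<phi> x))\<^sup>2 \<le> D" if x: "x \<in> {-1..1}" for x
  proof (cases "cmod (\<phi> x) = 0")
    case True thus ?thesis using D0 by simp
  next
    case False
    define p where "p = cmod (\<phi> x)"
    have p: "p > 0" using False by (simp add: p_def)
    have "p \<le> (2 * p + D / p) / 4" using pw2[OF x p] by (simp add: p_def)
    hence "4 * p * p \<le> 2 * p * p + D" using p by (simp add: field_simps)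
    thus ?thesis using D0 by (simp add: p_def power2_eq_square)
  qed
  have DP: "D \<le> P"
  proof -
    have "- integral {-1..1} (\<lambda>x. q x * (cmod (\<phi> x))\<^sup>2) = integral {-1..1} (\<lambda>x. - (q x * (cmod (\<phi> x))\<^sup>2))"
      by (simp add: integral_neg)
    also have "\<dots> \<le> P" unfolding P_def
    proof (rule integral_le)
      show "(\<lambda>x. - (q x * (cmod (\<phi> x))\<^sup>2)) integrable_on {-1..1}"
        using lbint_conv(2)[OF iqp] by (simp add: integrable_neg)
      show "(\<lambda>x. neg_part q x * (cmod (\<phi> x))\<^sup>2) integrable_on {-1..1}" by (rule lbint_conv(2)[OF iP])
      fix x show "- (q x * (cmod (\<phi> x))\<^sup>2) \<le> neg_part q x * (cmod (\<phi> x))\<^sup>2"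
        by (cases "q x \<le> 0") (auto simp: neg_part_def min_def)
    qed
    finally show ?thesis using Dq by simp
  qed
  have PQ: "P \<le> Q * ((c + D / c) / 2)" if c: "c > 0" for c
  proof -
    have "P \<le> integral {-1..1} (\<lambda>x. neg_part q x * ((c + D / c) / 2))" unfolding P_def
    proof (rule integral_le)
      show "(\<lambda>x. neg_part q x * (cmod (\<phi> x))\<^sup>2) integrable_on {-1..1}" by (rule lbint_conv(2)[OF iP])
      show "(\<lambda>x. neg_part q x * ((c + D / c) / 2)) integrable_on {-1..1}"
        using lbint_conv(2)[OF iQ] by (simp add: integrable_on_mult_left)
      fix x :: real assume "x \<in> {-1..1}"
      thus "neg_part q x * (cmod (\<phi> x))\<^sup>2 \<le> neg_part q x * ((c + D / c) / 2)"
        using pw1[OF _ c] by (intro mult_left_mono) (auto simp: neg_part_def)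
    qed
    thus ?thesis by (simp add: Q_def)
  qed
  have fin: "D \<le> Q\<^sup>2 \<and> P \<le> Q\<^sup>2"
  proof (cases "Q = 0")
    case True
    have "P \<le> 0" using PQ[of 1] True by simp
    thus ?thesis using DP True by simp
  next
    case False
    hence Qp: "Q > 0" using Q0 by simp
    have "P \<le> Q * ((Q + D / Q) / 2)" by (rule PQ[OF Qp])
    also have "\<dots> = (Q\<^sup>2 + D) / 2" using Qp by (simp add: field_simps power2_eq_square)
    finally have P2: "P \<le> (Q\<^sup>2 + D) / 2" .
    hence "D \<le> Q\<^sup>2" using DP by simp
    thus ?thesis using P2 by simp
  qed
  have LA: "(LBINT x=-1..1. (cmod (\<phi>' x))\<^sup>2 + q x * (cmod (\<phi> x))\<^sup>2) = 0"
    using lbint_conv(1)[OF iA] IA0 unfolding A_def by simp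
  have LB: "(LBINT x=-1..1. w x * (cmod (\<phi> x))\<^sup>2) = 0"
    using lbint_conv(1)[OF iB] IB0 unfolding B_def by simp
  have LD: "(LBINT x=-1..1. (cmod (\<phi>' x))\<^sup>2) = D" using lbint_conv(1)[OF ip'] by (simp add: D_def)
  have LQ: "(LBINT x=-1..1. neg_part q x) = Q" using lbint_conv(1)[OF iQ] by (simp add: Q_def)
  have LP: "(LBINT x=-1..1. neg_part q x * (cmod (\<phi> x))\<^sup>2) = P" using lbint_conv(1)[OF iP] by (simp add: P_def)
  have Q4: "Q\<^sup>2 \<le> 4 * Q\<^sup>2" by simp
  show ?thesis
    using iB[unfolded B_def] LB iA[unfolded A_def] LA ip' LD LQ iP LP fin Q4 ptw
    by (smt (verit))
qed

end
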